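(* Let $K\ge2$, let $(X,Y)$ be a random pair with $X\in\mathbb{R}^d$, $Y\in\{1,\dots,K\}$ with arbitrary joint distribution, and let $\ell:\{1,\dots,K\}^2\to[0,\infty)$ be a task loss. Let $\alpha\in[0,1)\cup(1,\frac{K}{K-1}]$, let $\phi$ be one of $\phi_{\mathrm{LR}},\phi_{\mathrm{LS},\alpha},\phi_{\mathrm{MLS},\alpha},\phi_{\mathrm{LSQ}}$, and let $\bar g\in\operatorname{argmin}_{g:\mathbb{R}^d\to\mathbb{R}^K}\mathbb{E}[\phi(g(X),Y)]$. If $\phi\in\{\phi_{\mathrm{LR}},\phi_{\mathrm{MLS},\alpha},\phi_{\mathrm{LSQ}}\}$, define $h_\ell(v)\in\operatorname{argmin}_{l\in\{1,\dots,K\}}\sum_{k=1}^K q_{\mathrm{L},k}(v)\ell(l,k)$; if $\phi=\phi_{\mathrm{LS},\alpha}$, define $h_\ell(v)\in\operatorname{argmin}_{l\in\{1,\dots,K\}}\sum_{k=1}^K q_{\mathrm{RL},\alpha,k}(v)\ell(l,k)$. Then $\mathbb{E}[\ell(h_\ell(\bar g(X)),Y)]=\inf_{f:\mathbb{R}^d\to\{1,\dots,K\}}\mathbb{E}[\ell(f(X),Y)]$.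
   Context: Notation: $t_k(y)=\mathbb{1}(k=y)$; $s_\alpha(v)=(1-\alpha)v+\frac{\alpha}{K}$ (componentwise), with inverse $s_\alpha^{-1}(u)=(u-\frac{\alpha}{K})/(1-\alpha)$ for $\alpha\ne1$; $q_{\mathrm{L},k}(v)=e^{v_k}/\sum_{l=1}^K e^{v_l}$; $q_{\mathrm{RL},\alpha,k}(v)=s_\alpha^{-1}(q_{\mathrm{L},k}(v))$. The losses for $v\in\mathbb{R}^K$, $y\in\{1,\dots,K\}$ are $\phi_{\mathrm{LR}}(v,y)=-\sum_k t_k(y)\ln q_{\mathrm{L},k}(v)$, $\phi_{\mathrm{LS},\alpha}(v,y)=-\sum_k s_\alpha(t_k(y))\ln q_{\mathrm{L},k}(v)$, $\phi_{\mathrm{MLS},\alpha}(v,y)=-\sum_k s_\alpha(t_k(y))\ln s_\alpha(q_{\mathrm{L},k}(v))$, $\phi_{\mathrm{LSQ}}(v,y)=\sum_k(t_k(y)-q_{\mathrm{L},k}(v))^2$. Minimizations/infima are over measurable functions. *)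

theory Defs
  imports "HOL-Probability.Probability"
begin

text \<open>Scores v in R^K are represented as functions nat => real; only the
components 1..K are used. Labels are natural numbers in {1..K}.\<close>

definition tvec :: "nat \<Rightarrow> nat \<Rightarrow> real" where
  "tvec k y = (if k = y then 1 else 0)"

definition s_al :: "nat \<Rightarrow> real \<Rightarrow> real \<Rightarrow> real" where
  "s_al K \<alpha> u = (1 - \<alpha>) * u + \<alpha> / real K"

definition s_al_inv :: "nat \<Rightarrow> real \<Rightarrow> real \<Rightarrow> real" where
  "s_al_inv K \<alpha> u = (u - \<alpha> / real K) / (1 - \<alpha>)"

definition qL :: "nat \<Rightarrow> (nat \<Rightarrow> real) \<Rightarrow> nat \<Rightarrow> real" where
  "qL K v k = exp (v k) / (\<Sum>l=1..K. exp (v l))"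

definition qRL :: "nat \<Rightarrow> real \<Rightarrow> (nat \<Rightarrow> real) \<Rightarrow> nat \<Rightarrow> real" where
  "qRL K \<alpha> v k = s_al_inv K \<alpha> (qL K v k)"

definition phi_LR :: "nat \<Rightarrow> (nat \<Rightarrow> real) \<Rightarrow> nat \<Rightarrow> real" where
  "phi_LR K v y = - (\<Sum>k=1..K. tvec k y * ln (qL K v k))"

definition phi_LS :: "nat \<Rightarrow> real \<Rightarrow> (nat \<Rightarrow> real) \<Rightarrow> nat \<Rightarrow> real" where
  "phi_LS K \<alpha> v y = - (\<Sum>k=1..K. s_al K \<alpha> (tvec k y) * ln (qL K v k))"

definition phi_MLS :: "nat \<Rightarrow> real \<Rightarrow> (nat \<Rightarrow> real) \<Rightarrow> nat \<Rightarrow> real" where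
  "phi_MLS K \<alpha> v y = - (\<Sum>k=1..K. s_al K \<alpha> (tvec k y) * ln (s_al K \<alpha> (qL K v k)))"

definition phi_LSQ :: "nat \<Rightarrow> (nat \<Rightarrow> real) \<Rightarrow> nat \<Rightarrow> real" where
  "phi_LSQ K v y = (\<Sum>k=1..K. (tvec k y - qL K v k)\<^sup>2)"

datatype loss_kind = LR | LS | MLS | LSQ

fun phi :: "loss_kind \<Rightarrow> nat \<Rightarrow> real \<Rightarrow> (nat \<Rightarrow> real) \<Rightarrow> nat \<Rightarrow> real" where
  "phi LR K \<alpha> = phi_LR K"
| "phi LS K \<alpha> = phi_LS K \<alpha>"
| "phi MLS K \<alpha> = phi_MLS K \<alpha>"
| "phi LSQ K \<alpha> = phi_LSQ K"

fun qdec :: "loss_kind \<Rightarrow> nat \<Rightarrow> real \<Rightarrow> (nat \<Rightarrow> real) \<Rightarrow> nat \<Rightarrow> real" where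
  "qdec LS K \<alpha> = qRL K \<alpha>"
| "qdec LR K \<alpha> = qL K"
| "qdec MLS K \<alpha> = qL K"
| "qdec LSQ K \<alpha> = qL K"

definition score_fns :: "nat \<Rightarrow> (real^'d \<Rightarrow> nat \<Rightarrow> real) set" where
  "score_fns K = {g. \<forall>k\<in>{1..K}. (\<lambda>x. g x k) \<in> borel_measurable borel}"

definition classifiers :: "nat \<Rightarrow> (real^'d \<Rightarrow> nat) set" where
  "classifiers K = {f. f \<in> borel \<rightarrow>\<^sub>M count_space UNIV \<and> (\<forall>x. f x \<in> {1..K})}"

end

theory Submission
  imports Defs
begin


lemma decomp_ennreal:
  fixes M :: "'w measure" and X :: "'w \<Rightarrow> real^'d" and Y :: "'w \<Rightarrow> nat"
  assumes P: "prob_space M"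
    and Xm: "X \<in> borel_measurable M"
    and Ym: "Y \<in> M \<rightarrow>\<^sub>M count_space UNIV"
    and Yr: "\<forall>\<omega>\<in>space M. Y \<omega> \<in> {1..K}"
  defines "\<mu> \<equiv> distr M borel X"
  defines "e \<equiv> (\<lambda>k. RN_deriv \<mu> (distr (density M (indicator (Y -` {k} \<inter> space M))) borel X))"
  assumes Fm: "\<forall>k\<in>{1..K}. (\<lambda>x. F x k) \<in> borel_measurable borel"
  shows "(\<integral>\<^sup>+\<omega>. F (X \<omega>) (Y \<omega>) \<partial>M) = (\<integral>\<^sup>+x. (\<Sum>k=1..K. e k x * F x k) \<partial>\<mu>)"
proof -
  interpret prob_space M by fact
  interpret mu: prob_space \<mu> unfolding \<mu>_def by (rule prob_space_distr[OF Xm])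
  have S: "Y -` {k} \<inter> space M \<in> sets M" for k
    using Ym by (rule measurable_sets) auto
  have Fm': "(\<lambda>x. F x k) \<in> borel_measurable borel" if "k \<in> {1..K}" for k using Fm that by auto
  have "(\<integral>\<^sup>+\<omega>. F (X \<omega>) (Y \<omega>) \<partial>M) = (\<integral>\<^sup>+\<omega>. (\<Sum>k=1..K. indicator (Y -` {k} \<inter> space M) \<omega> * F (X \<omega>) k) \<partial>M)"
  proof (rule nn_integral_cong)
    fix \<omega> assume w: "\<omega> \<in> space M"
    have "(\<Sum>k=1..K. indicator (Y -` {k} \<inter> space M) \<omega> * F (X \<omega>) k) = (\<Sum>k\<in>{1..K}. if k = Y \<omega> then F (X \<omega>) k else 0)"
      by (rule sum.cong) (auto simp: indicator_def w)
    also have "\<dots> = F (X \<omega>) (Y \<omega>)" using Yr w by simp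
    finally show "F (X \<omega>) (Y \<omega>) = (\<Sum>k=1..K. indicator (Y -` {k} \<inter> space M) \<omega> * F (X \<omega>) k)" by simp
  qed
  also have "\<dots> = (\<Sum>k=1..K. \<integral>\<^sup>+\<omega>. indicator (Y -` {k} \<inter> space M) \<omega> * F (X \<omega>) k \<partial>M)"
    by (rule nn_integral_sum) (intro borel_measurable_times_ennreal borel_measurable_indicator S measurable_compose[OF Xm Fm'], simp_all)
  also have "\<dots> = (\<Sum>k=1..K. \<integral>\<^sup>+x. e k x * F x k \<partial>\<mu>)"
  proof (rule sum.cong[OF refl])
    fix k assume k: "k \<in> {1..K}"
    let ?N = "density M (indicator (Y -` {k} \<inter> space M))"
    have XN: "X \<in> measurable ?N borel" using Xm by simp
    have ac: "absolutely_continuous \<mu> (distr ?N borel X)"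
      unfolding absolutely_continuous_def
    proof
      fix A assume "A \<in> null_sets \<mu>"
      then have A: "A \<in> sets borel" "emeasure M (X -` A \<inter> space M) = 0"
        unfolding \<mu>_def by (auto simp: null_sets_def emeasure_distr[OF Xm])
      have "emeasure (distr ?N borel X) A = emeasure ?N (X -` A \<inter> space M)"
        using A XN by (simp add: emeasure_distr)
      also have "\<dots> = 0"
      proof -
        have "emeasure ?N (X -` A \<inter> space M) \<le> emeasure M (X -` A \<inter> space M)"
          using A(1) Xm S
          by (subst emeasure_density) (auto intro!: nn_integral_mono simp: indicator_def
                  nn_integral_indicator[symmetric] simp del: nn_integral_indicator)
        then show ?thesis using A by simp
      qed
      finally show "A \<in> null_sets (distr ?N borel X)" using A by (simp add: null_sets_def)
    qed
    have "(\<integral>\<^sup>+\<omega>. indicator (Y -` {k} \<inter> space M) \<omega> * F (X \<omega>) k \<partial>M) = (\<integral>\<^sup>+\<omega>. F (X \<omega>) k \<partial>?N)"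
      using S Fm'[OF k] Xm by (subst nn_integral_density) auto
    also have "\<dots> = (\<integral>\<^sup>+x. F x k \<partial>distr ?N borel X)"
      using XN Fm'[OF k] by (subst nn_integral_distr) auto
    also have "\<dots> = (\<integral>\<^sup>+x. e k x * F x k \<partial>\<mu>)"
      unfolding e_def using Fm'[OF k] ac
      by (subst mu.RN_deriv_nn_integral) (auto simp: \<mu>_def)
    finally show "(\<integral>\<^sup>+\<omega>. indicator (Y -` {k} \<inter> space M) \<omega> * F (X \<omega>) k \<partial>M) = (\<integral>\<^sup>+x. e k x * F x k \<partial>\<mu>)" .
  qed
  also have "\<dots> = (\<integral>\<^sup>+x. (\<Sum>k=1..K. e k x * F x k) \<partial>\<mu>)"
    by (rule nn_integral_sum[symmetric]) (intro borel_measurable_times_ennreal Fm', simp_all add: e_def \<mu>_def Fm')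
  finally show ?thesis .
qed


lemma eta_exists:
  fixes M :: "'w measure" and X :: "'w \<Rightarrow> real^'d" and Y :: "'w \<Rightarrow> nat"
  assumes P: "prob_space M"
    and Xm: "X \<in> borel_measurable M"
    and Ym: "Y \<in> M \<rightarrow>\<^sub>M count_space UNIV"
    and Yr: "\<forall>\<omega>\<in>space M. Y \<omega> \<in> {1..K}"
    and K1: "K \<ge> 1"
  shows "\<exists>\<eta>::nat \<Rightarrow> real^'d \<Rightarrow> real. (\<forall>k. \<eta> k \<in> borel_measurable borel) \<and> (\<forall>k x. 0 \<le> \<eta> k x)
     \<and> (\<forall>x. (\<Sum>k=1..K. \<eta> k x) = 1) \<and>
     (\<forall>F. (\<forall>k\<in>{1..K}. (\<lambda>x. F x k) \<in> borel_measurable borel) \<longrightarrow>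
        (\<integral>\<^sup>+\<omega>. F (X \<omega>) (Y \<omega>) \<partial>M) = (\<integral>\<^sup>+x. (\<Sum>k=1..K. ennreal (\<eta> k x) * F x k) \<partial>distr M borel X))"
proof -
  define \<mu> where "\<mu> = distr M borel X"
  define e where "e = (\<lambda>k. RN_deriv \<mu> (distr (density M (indicator (Y -` {k} \<inter> space M))) borel X))"
  interpret mu: prob_space \<mu> unfolding \<mu>_def by (rule prob_space.prob_space_distr[OF P Xm])
  have D: "(\<integral>\<^sup>+\<omega>. F (X \<omega>) (Y \<omega>) \<partial>M) = (\<integral>\<^sup>+x. (\<Sum>k=1..K. e k x * F x k) \<partial>\<mu>)"
    if "\<forall>k\<in>{1..K}. (\<lambda>x. F x k) \<in> borel_measurable borel" for F
    using decomp_ennreal[OF P Xm Ym Yr that] unfolding \<mu>_def e_def .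
  have em: "e k \<in> borel_measurable borel" for k
    unfolding e_def \<mu>_def by (metis borel_measurable_RN_deriv sets_distr measurable_cong_sets)
  have sm: "(\<lambda>x. \<Sum>k=1..K. e k x) \<in> borel_measurable \<mu>"
    using em by (simp add: \<mu>_def)
  have "density \<mu> (\<lambda>x. \<Sum>k=1..K. e k x) = density \<mu> (\<lambda>x. 1)"
  proof (rule measure_eqI)
    fix A assume "A \<in> sets (density \<mu> (\<lambda>x. \<Sum>k=1..K. e k x))"
    then have A: "A \<in> sets borel" by (simp add: \<mu>_def)
    have "emeasure (density \<mu> (\<lambda>x. \<Sum>k=1..K. e k x)) A = (\<integral>\<^sup>+x. (\<Sum>k=1..K. e k x * indicator A x) \<partial>\<mu>)"
      using A sm by (subst emeasure_density) (auto simp: \<mu>_def sum_distrib_right)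
    also have "\<dots> = (\<integral>\<^sup>+\<omega>. indicator A (X \<omega>) \<partial>M)"
      using D[of "\<lambda>x k. indicator A x"] A by simp
    also have "\<dots> = emeasure (density \<mu> (\<lambda>x. 1)) A"
      using A Xm by (subst nn_integral_distr[symmetric, of X M borel]) (auto simp: \<mu>_def emeasure_density)
    finally show "emeasure (density \<mu> (\<lambda>x. \<Sum>k=1..K. e k x)) A = emeasure (density \<mu> (\<lambda>x. 1)) A" .
  qed simp
  then have AE1: "AE x in \<mu>. (\<Sum>k=1..K. e k x) = 1"
    using mu.density_unique[OF sm] by simp
  define \<eta> where "\<eta> = (\<lambda>k x. if (\<Sum>j=1..K. e j x) = 1 then enn2real (e k x) else 1 / real K)"
  have fin: "e k x < \<infinity>" if "(\<Sum>j=1..K. e j x) = 1" "k \<in> {1..K}" for k x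
  proof -
    have "e k x \<le> (\<Sum>j=1..K. e j x)" by (rule member_le_sum) (use that in auto)
    then have "e k x \<le> 1" using that by simp
    then show ?thesis using order.strict_trans1[of "e k x" 1 \<infinity>] by simp
  qed
  have eq: "ennreal (\<eta> k x) = e k x" if "(\<Sum>j=1..K. e j x) = 1" "k \<in> {1..K}" for k x
    using fin[OF that] that by (simp add: \<eta>_def ennreal_enn2real_if less_top)
  have "(\<forall>k. \<eta> k \<in> borel_measurable borel)"
  proof
    fix k
    note em[measurable]
    show "\<eta> k \<in> borel_measurable borel" unfolding \<eta>_def by measurable
  qed
  moreover have "\<forall>k x. 0 \<le> \<eta> k x" by (simp add: \<eta>_def)
  moreover have "(\<Sum>k=1..K. \<eta> k x) = 1" for x
  proof (cases "(\<Sum>j=1..K. e j x) = 1")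
    case True
    have "ennreal (\<Sum>k=1..K. \<eta> k x) = (\<Sum>k=1..K. e k x)"
    proof -
      have "ennreal (\<Sum>k=1..K. \<eta> k x) = (\<Sum>k=1..K. ennreal (\<eta> k x))"
        by (rule sum_ennreal[symmetric]) (simp add: \<eta>_def)
      also have "\<dots> = (\<Sum>k=1..K. e k x)"
        by (rule sum.cong) (auto simp: eq[OF True])
      finally show ?thesis .
    qed
    then show ?thesis using True by simp
  next
    case False then show ?thesis using K1 by (simp add: \<eta>_def)
  qed
  moreover have "(\<integral>\<^sup>+\<omega>. F (X \<omega>) (Y \<omega>) \<partial>M) = (\<integral>\<^sup>+x. (\<Sum>k=1..K. ennreal (\<eta> k x) * F x k) \<partial>distr M borel X)"
    if "\<forall>k\<in>{1..K}. (\<lambda>x. F x k) \<in> borel_measurable borel" for F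
  proof -
    have "(\<integral>\<^sup>+x. (\<Sum>k=1..K. e k x * F x k) \<partial>\<mu>) = (\<integral>\<^sup>+x. (\<Sum>k=1..K. ennreal (\<eta> k x) * F x k) \<partial>\<mu>)"
      by (rule nn_integral_cong_AE) (use AE1 in \<open>eventually_elim, simp add: eq\<close>)
    then show ?thesis using D[OF that] by (simp add: \<mu>_def)
  qed
  ultimately show ?thesis by blast
qed



lemma term_ineq:
  fixes p r :: real
  assumes p: "0 \<le> p" and r: "0 < r"
  shows "p * ln r + (p - r)/2 + (p - r)^2 / (2*(p+r)) \<le> p * ln ((p+r)/2)"
proof -
  have pr: "0 < p + r" using p r by simp
  have "ln (r / ((p+r)/2)) \<le> r / ((p+r)/2) - 1"
    by (rule ln_le_minus_one) (use pr r in simp)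
  moreover have "ln (r / ((p+r)/2)) = ln r - ln ((p+r)/2)"
    by (rule ln_divide_pos) (use r pr in auto)
  ultimately have "ln r - ln ((p+r)/2) \<le> r / ((p+r)/2) - 1"
    by simp
  then have "p * (ln r - ln ((p+r)/2)) \<le> p * (r / ((p+r)/2) - 1)"
    using p by (rule mult_left_mono)
  moreover have "p * (r / ((p+r)/2) - 1) = - ((p - r)/2 + (p - r)^2 / (2*(p+r)))"
    using pr by (simp add: field_simps power2_eq_square)
  ultimately show ?thesis by (simp add: algebra_simps)
qed

lemma CE_strict:
  fixes p r :: "nat \<Rightarrow> real"
  assumes I: "finite I" and p: "\<forall>j\<in>I. 0 \<le> p j" and r: "\<forall>j\<in>I. 0 < r j"
    and S: "(\<Sum>j\<in>I. p j) = (\<Sum>j\<in>I. r j)" and ne: "\<exists>j\<in>I. p j \<noteq> r j"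
  shows "(\<Sum>j\<in>I. p j * ln (r j)) < (\<Sum>j\<in>I. p j * ln ((p j + r j)/2))"
proof -
  have "(\<Sum>j\<in>I. p j * ln (r j) + (p j - r j)/2) < (\<Sum>j\<in>I. p j * ln ((p j + r j)/2))"
  proof (rule sum_strict_mono_ex1[OF I])
    show "\<forall>j\<in>I. p j * ln (r j) + (p j - r j)/2 \<le> p j * ln ((p j + r j)/2)"
    proof
      fix j assume j: "j \<in> I"
      have pj: "0 \<le> p j" "0 < r j" using p r j by auto
      have "0 \<le> (p j - r j)^2 / (2*(p j + r j))" using pj
        by (intro divide_nonneg_pos) auto
      then show "p j * ln (r j) + (p j - r j)/2 \<le> p j * ln ((p j + r j)/2)"
        using term_ineq[of "p j" "r j"] p r j by auto
    qed
    from ne obtain j where j: "j \<in> I" "p j \<noteq> r j" by blast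
    have pj: "0 \<le> p j" "0 < r j" using p r j by auto
    have "0 < (p j - r j)^2 / (2*(p j + r j))" using pj j
      by (intro divide_pos_pos) auto
    then show "\<exists>j\<in>I. p j * ln (r j) + (p j - r j)/2 < p j * ln ((p j + r j)/2)"
      using term_ineq[of "p j" "r j"] p r j by force
  qed
  moreover have "(\<Sum>j\<in>I. p j * ln (r j) + (p j - r j)/2) = (\<Sum>j\<in>I. p j * ln (r j))"
    using S by (simp add: sum.distrib sum_divide_distrib[symmetric] sum_subtractf)
  ultimately show ?thesis by simp
qed

lemma qL_pos: "K \<ge> 1 \<Longrightarrow> 0 < qL K v k"
  unfolding qL_def by (intro divide_pos_pos) (auto intro!: sum_pos)

lemma qL_sum: "K \<ge> 1 \<Longrightarrow> (\<Sum>k=1..K. qL K v k) = 1"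
  unfolding qL_def
  by (subst sum_divide_distrib[symmetric]) (simp add: sum_pos order.strict_implies_not_eq[symmetric]
      order.strict_implies_not_eq)

lemma qL_lt1: assumes K: "K \<ge> 2" and k: "k \<in> {1..K}" shows "qL K v k < 1"
proof -
  define j where "j = (if k = 1 then 2 else (1::nat))"
  have j: "j \<in> {1..K}" "j \<noteq> k" using K k by (auto simp: j_def)
  have "qL K v k + qL K v j \<le> (\<Sum>l=1..K. qL K v l)"
  proof -
    have "(\<Sum>l\<in>{k,j}. qL K v l) \<le> (\<Sum>l=1..K. qL K v l)"
      by (rule sum_mono2) (use j k K qL_pos[of K v] in \<open>auto intro: less_imp_le\<close>)
    then show ?thesis using j by simp
  qed
  then show ?thesis using qL_sum[of K v] qL_pos[of K v j] K by simp
qed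

lemma qL_ln:
  assumes K: "K \<ge> 1" and r: "\<forall>j\<in>{1..K}. 0 < r j" and S: "(\<Sum>j=1..K. r j) = 1"
    and k: "k \<in> {1..K}"
  shows "qL K (\<lambda>j. ln (r j)) k = r k"
proof -
  have "(\<Sum>l=1..K. exp (ln (r l))) = 1" using S r by (metis (no_types, lifting) exp_ln sum.cong)
  then show ?thesis using k r by (simp add: qL_def)
qed

lemma swap_sum:
  "(\<Sum>k\<in>I. (\<eta>::nat\<Rightarrow>real) k * (\<Sum>j\<in>I. a j k * L j)) = (\<Sum>j\<in>I. (\<Sum>k\<in>I. \<eta> k * a j k) * L j)"
  by (simp add: sum_distrib_left sum_distrib_right mult_ac) (rule sum.swap)

lemma tv1: assumes "j \<in> {1..K}" shows "(\<Sum>k=1..K. \<eta> k * tvec j k) = \<eta> j"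
proof -
  have "(\<Sum>k=1..K. \<eta> k * tvec j k) = (\<Sum>k\<in>{1..K}. if j = k then \<eta> k else 0)"
    by (rule sum.cong) (auto simp: tvec_def)
  then show ?thesis using assms by simp
qed

lemma tvs: assumes "(\<Sum>k=1..K. \<eta> k) = 1" "j \<in> {1..K}"
  shows "(\<Sum>k=1..K. \<eta> k * s_al K \<alpha> (tvec j k)) = s_al K \<alpha> (\<eta> j)"
proof -
  have "(\<Sum>k=1..K. \<eta> k * s_al K \<alpha> (tvec j k)) = (1-\<alpha>) * (\<Sum>k=1..K. \<eta> k * tvec j k) + \<alpha>/K * (\<Sum>k=1..K. \<eta> k)"
  proof -
    have "(\<Sum>k=1..K. \<eta> k * s_al K \<alpha> (tvec j k)) = (\<Sum>k=1..K. (1-\<alpha>) * (\<eta> k * tvec j k) + \<alpha>/K * \<eta> k)"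
      by (rule sum.cong) (auto simp: s_al_def algebra_simps)
    also have "\<dots> = (1-\<alpha>) * (\<Sum>k=1..K. \<eta> k * tvec j k) + \<alpha>/K * (\<Sum>k=1..K. \<eta> k)"
      by (simp add: sum.distrib sum_distrib_left)
    finally show ?thesis .
  qed
  then show ?thesis using assms tv1[of j K \<eta>] by (simp add: s_al_def)
qed


definition alcond :: "nat \<Rightarrow> real \<Rightarrow> bool" where
  "alcond K \<alpha> \<longleftrightarrow> (0 \<le> \<alpha> \<and> \<alpha> < 1) \<or> (1 < \<alpha> \<and> \<alpha> \<le> real K / (real K - 1))"

lemma al_ne1: "alcond K \<alpha> \<Longrightarrow> \<alpha> \<noteq> 1" by (auto simp: alcond_def)

lemma al_bound: assumes "alcond K \<alpha>" "K \<ge> 2" "1 < \<alpha>" shows "\<alpha> * (real K - 1) \<le> real K"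
proof -
  have "\<alpha> \<le> real K / (real K - 1)" using assms by (auto simp: alcond_def)
  moreover have "real K - 1 > 0" using assms by simp
  ultimately show ?thesis by (simp add: pos_le_divide_eq)
qed

lemma s_nonneg: assumes "alcond K \<alpha>" "K \<ge> 2" "0 \<le> u" "u \<le> 1" shows "0 \<le> s_al K \<alpha> u"
proof (cases "\<alpha> < 1")
  case True
  then have "0 \<le> \<alpha>" using assms by (auto simp: alcond_def)
  then show ?thesis using True assms by (simp add: s_al_def)
next
  case False
  then have a: "1 < \<alpha>" using al_ne1[OF assms(1)] by simp
  have b: "\<alpha> * (real K - 1) \<le> real K" by (rule al_bound[OF assms(1,2) a])
  have "(1 - \<alpha>) * 1 \<le> (1 - \<alpha>) * u" using a assms by (intro mult_left_mono_neg) auto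
  moreover have "0 \<le> (1 - \<alpha>) + \<alpha> / real K" using b assms
    by (simp add: field_simps)
  ultimately show ?thesis by (simp add: s_al_def)
qed

lemma s_pos: assumes "alcond K \<alpha>" "K \<ge> 2" "0 < u" "u < 1" shows "0 < s_al K \<alpha> u"
proof (cases "\<alpha> < 1")
  case True
  then have "0 \<le> \<alpha>" using assms by (auto simp: alcond_def)
  then show ?thesis using True assms by (simp add: s_al_def add_pos_nonneg)
next
  case False
  then have a: "1 < \<alpha>" using al_ne1[OF assms(1)] by simp
  have b: "\<alpha> * (real K - 1) \<le> real K" by (rule al_bound[OF assms(1,2) a])
  have "(1 - \<alpha>) * 1 < (1 - \<alpha>) * u" using a assms by (intro mult_strict_left_mono_neg) auto
  moreover have "0 \<le> (1 - \<alpha>) + \<alpha> / real K" using b assms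
    by (simp add: field_simps)
  ultimately show ?thesis by (simp add: s_al_def)
qed

lemma s_le1: assumes "alcond K \<alpha>" "K \<ge> 2" "0 \<le> u" "u \<le> 1" shows "s_al K \<alpha> u \<le> 1"
proof (cases "\<alpha> < 1")
  case True
  then have a: "0 \<le> \<alpha>" using assms by (auto simp: alcond_def)
  have "(1 - \<alpha>) * u \<le> (1 - \<alpha>) * 1" using True assms by (intro mult_left_mono) auto
  moreover have "\<alpha> / real K \<le> \<alpha>" using a assms by (simp add: divide_le_eq) (simp add: mult_le_cancel_left1)
  ultimately show ?thesis by (simp add: s_al_def)
next
  case False
  then have a: "1 < \<alpha>" using al_ne1[OF assms(1)] by simp
  have b: "\<alpha> * (real K - 1) \<le> real K" by (rule al_bound[OF assms(1,2) a])
  have "(1 - \<alpha>) * u \<le> 0" using a assms by (simp add: mult_nonpos_nonneg)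
  moreover have "\<alpha> * 1 \<le> \<alpha> * (real K - 1)" using a assms by (intro mult_left_mono) auto
  then have "\<alpha> \<le> real K" using b by linarith
  then have "\<alpha> / real K \<le> 1" using assms by simp
  ultimately show ?thesis by (simp add: s_al_def)
qed

lemma s_sum: "(\<Sum>j=1..K. s_al K \<alpha> (x j)) = (1 - \<alpha>) * (\<Sum>j=1..K. x j) + (if K = 0 then 0 else \<alpha>)"
  by (simp add: s_al_def sum.distrib sum_distrib_left)

lemma s_inj: "\<alpha> \<noteq> 1 \<Longrightarrow> s_al K \<alpha> a = s_al K \<alpha> b \<Longrightarrow> a = b"
  by (simp add: s_al_def)

lemma s_mid: "s_al K \<alpha> ((a + b)/2) = (s_al K \<alpha> a + s_al K \<alpha> b)/2"
  by (simp add: s_al_def field_simps)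

lemma s_inv_s: "\<alpha> \<noteq> 1 \<Longrightarrow> s_al_inv K \<alpha> (s_al K \<alpha> u) = u"
  by (simp add: s_al_def s_al_inv_def)

lemma neg_sum_mult: "(\<Sum>k\<in>I. (\<eta>::nat\<Rightarrow>real) k * - f k) = - (\<Sum>k\<in>I. \<eta> k * f k)"
  by (simp add: sum_negf)

lemma R_gen:
  assumes "(\<Sum>k=1..K. \<eta> k) = 1"
  shows "(\<Sum>k=1..K. \<eta> k * - (\<Sum>j=1..K. s_al K \<alpha> (tvec j k) * L j)) = - (\<Sum>j=1..K. s_al K \<alpha> (\<eta> j) * L j)"
proof -
  have "(\<Sum>k=1..K. \<eta> k * - (\<Sum>j=1..K. s_al K \<alpha> (tvec j k) * L j))
      = - (\<Sum>j=1..K. (\<Sum>k=1..K. \<eta> k * s_al K \<alpha> (tvec j k)) * L j)"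
    by (simp only: neg_sum_mult swap_sum)
  also have "\<dots> = - (\<Sum>j=1..K. s_al K \<alpha> (\<eta> j) * L j)"
    using tvs[OF assms] by simp
  finally show ?thesis .
qed

lemma R_LR:
  "(\<Sum>k=1..K. \<eta> k * phi_LR K v k) = - (\<Sum>j=1..K. \<eta> j * ln (qL K v j))"
proof -
  have "(\<Sum>k=1..K. \<eta> k * phi_LR K v k)
      = - (\<Sum>j=1..K. (\<Sum>k=1..K. \<eta> k * tvec j k) * ln (qL K v j))"
    unfolding phi_LR_def by (simp only: neg_sum_mult swap_sum)
  also have "\<dots> = - (\<Sum>j=1..K. \<eta> j * ln (qL K v j))"
    using tv1 by simp
  finally show ?thesis .
qed

lemma R_LS: "(\<Sum>k=1..K. \<eta> k) = 1 \<Longrightarrow>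
  (\<Sum>k=1..K. \<eta> k * phi_LS K \<alpha> v k) = - (\<Sum>j=1..K. s_al K \<alpha> (\<eta> j) * ln (qL K v j))"
  unfolding phi_LS_def by (rule R_gen)

lemma R_MLS: "(\<Sum>k=1..K. \<eta> k) = 1 \<Longrightarrow>
  (\<Sum>k=1..K. \<eta> k * phi_MLS K \<alpha> v k) = - (\<Sum>j=1..K. s_al K \<alpha> (\<eta> j) * ln (s_al K \<alpha> (qL K v j)))"
  unfolding phi_MLS_def by (rule R_gen)

lemma R_LSQ:
  assumes "(\<Sum>k=1..K. \<eta> k) = 1"
  shows "(\<Sum>k=1..K. \<eta> k * phi_LSQ K v k) = (\<Sum>j=1..K. (qL K v j - \<eta> j)^2 + (\<eta> j - (\<eta> j)^2))"
proof -
  let ?q = "qL K v"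
  have "(\<Sum>k=1..K. \<eta> k * phi_LSQ K v k) = (\<Sum>k=1..K. \<eta> k * (\<Sum>j=1..K. tvec j k * (1 - 2 * ?q j) + (?q j)^2))"
    unfolding phi_LSQ_def
    by (intro sum.cong refl arg_cong2[where f="(*)"]) (auto simp: tvec_def power2_eq_square algebra_simps)
  also have "\<dots> = (\<Sum>k=1..K. \<eta> k * (\<Sum>j=1..K. tvec j k * (1 - 2 * ?q j))) + (\<Sum>k=1..K. \<eta> k) * (\<Sum>j=1..K. (?q j)^2)"
    by (simp add: sum.distrib distrib_left sum_distrib_right)
  also have "\<dots> = (\<Sum>j=1..K. (\<Sum>k=1..K. \<eta> k * tvec j k) * (1 - 2 * ?q j)) + (\<Sum>j=1..K. (?q j)^2)"
    using assms by (simp only: swap_sum mult_1)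
  also have "\<dots> = (\<Sum>j=1..K. \<eta> j * (1 - 2 * ?q j)) + (\<Sum>j=1..K. (?q j)^2)"
    using tv1 by simp
  also have "\<dots> = (\<Sum>j=1..K. (qL K v j - \<eta> j)^2 + (\<eta> j - (\<eta> j)^2))"
    by (simp add: sum.distrib[symmetric] power2_eq_square algebra_simps)
  finally show ?thesis .
qed


lemma phi_nonneg:
  assumes K: "K \<ge> 2" and al: "alcond K \<alpha>" and k: "k \<in> {1..K}"
  shows "0 \<le> phi kind K \<alpha> v k"
proof -
  have q: "0 < qL K v j" "qL K v j < 1" if "j \<in> {1..K}" for j
    using qL_pos[of K v j] qL_lt1[OF K that] K by auto
  have t01: "0 \<le> tvec j k" "tvec j k \<le> 1" for j by (auto simp: tvec_def)
  have lq: "ln (qL K v j) \<le> 0" if "j \<in> {1..K}" for j using q[OF that] by simp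
  show ?thesis
  proof (cases kind)
    case LR
    have "(\<Sum>j=1..K. tvec j k * ln (qL K v j)) \<le> 0"
      by (rule sum_nonpos) (use lq t01 in \<open>auto intro!: mult_nonneg_nonpos\<close>)
    then show ?thesis using LR by (simp add: phi_LR_def)
  next
    case LS
    have "(\<Sum>j=1..K. s_al K \<alpha> (tvec j k) * ln (qL K v j)) \<le> 0"
      by (rule sum_nonpos) (use lq t01 s_nonneg[OF al K] in \<open>auto intro!: mult_nonneg_nonpos\<close>)
    then show ?thesis using LS by (simp add: phi_LS_def)
  next
    case MLS
    have "(\<Sum>j=1..K. s_al K \<alpha> (tvec j k) * ln (s_al K \<alpha> (qL K v j))) \<le> 0"
    proof (rule sum_nonpos)
      fix j assume j: "j \<in> {1..K}"
      have "0 < s_al K \<alpha> (qL K v j)" using s_pos[OF al K] q[OF j] by auto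
      moreover have "s_al K \<alpha> (qL K v j) \<le> 1" using s_le1[OF al K] q[OF j] by auto
      ultimately have "ln (s_al K \<alpha> (qL K v j)) \<le> 0" by simp
      then show "s_al K \<alpha> (tvec j k) * ln (s_al K \<alpha> (qL K v j)) \<le> 0"
        using s_nonneg[OF al K t01] by (intro mult_nonneg_nonpos) auto
    qed
    then show ?thesis using MLS by (simp add: phi_MLS_def)
  next
    case LSQ
    then show ?thesis by (simp add: phi_LSQ_def sum_nonneg)
  qed
qed

lemma pointwise:
  assumes K: "K \<ge> 2" and al: "alcond K \<alpha>" and eta: "\<forall>j\<in>{1..K}. 0 \<le> \<eta> j"
    and S: "(\<Sum>j=1..K. \<eta> j) = 1"
    and tgt: "tgt = (\<lambda>j. if kind = LS then s_al K \<alpha> (\<eta> j) else \<eta> j)"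
    and ne: "\<exists>j\<in>{1..K}. qL K v j \<noteq> tgt j"
  shows "(\<Sum>k=1..K. \<eta> k * phi kind K \<alpha> (\<lambda>j. ln ((qL K v j + tgt j)/2)) k)
       < (\<Sum>k=1..K. \<eta> k * phi kind K \<alpha> v k)"
proof -
  define q where "q = qL K v"
  define v' where "v' = (\<lambda>j. ln ((qL K v j + tgt j)/2))"
  have K1: "K \<ge> 1" using K by simp
  have e1: "\<eta> j \<le> 1" if "j \<in> {1..K}" for j
  proof -
    have "\<eta> j \<le> (\<Sum>j=1..K. \<eta> j)" by (rule member_le_sum) (use eta that in auto)
    then show ?thesis using S by simp
  qed
  have q: "0 < q j" "q j < 1" if "j \<in> {1..K}" for j
    unfolding q_def using qL_pos[of K v j] qL_lt1[OF K that] K by auto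
  have qs: "(\<Sum>j=1..K. q j) = 1" unfolding q_def by (rule qL_sum[OF K1])
  have tn: "0 \<le> tgt j" if "j \<in> {1..K}" for j
    using eta e1 that s_nonneg[OF al K] by (auto simp: tgt)
  have sse: "(\<Sum>j=1..K. s_al K \<alpha> (\<eta> j)) = 1" using S K s_sum[of K \<alpha> \<eta>] by simp
  have ts: "(\<Sum>j=1..K. tgt j) = 1" using S sse by (cases "kind = LS") (simp_all add: tgt)
  have q'p: "\<forall>j\<in>{1..K}. 0 < (q j + tgt j)/2" using q tn by (auto intro: add_pos_nonneg)
  have q's: "(\<Sum>j=1..K. (q j + tgt j)/2) = 1"
    using qs ts by (simp add: sum_divide_distrib[symmetric] sum.distrib)
  have QL: "qL K v' j = (q j + tgt j)/2" if "j \<in> {1..K}" for j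
    unfolding v'_def q_def[symmetric] by (rule qL_ln[OF K1 q'p q's that])
  have ne': "\<exists>j\<in>{1..K}. tgt j \<noteq> q j" using ne unfolding q_def by (metis)
  show ?thesis
  proof (cases kind)
    case LR
    then have tg: "tgt = \<eta>" by (simp add: tgt)
    have "(\<Sum>j=1..K. \<eta> j * ln (q j)) < (\<Sum>j=1..K. \<eta> j * ln ((\<eta> j + q j)/2))"
      by (rule CE_strict) (use eta q qs S ne' tg in auto)
    moreover have "(\<Sum>j=1..K. \<eta> j * ln (qL K v' j)) = (\<Sum>j=1..K. \<eta> j * ln ((\<eta> j + q j)/2))"
      by (rule sum.cong) (auto simp: QL tg add.commute)
    ultimately show ?thesis using LR R_LR[of \<eta> K v] R_LR[of \<eta> K v'] by (simp add: q_def v'_def)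
  next
    case LS
    then have tg: "tgt = (\<lambda>j. s_al K \<alpha> (\<eta> j))" by (simp add: tgt)
    have "(\<Sum>j=1..K. tgt j * ln (q j)) < (\<Sum>j=1..K. tgt j * ln ((tgt j + q j)/2))"
      by (rule CE_strict) (use tn q qs ts ne' in auto)
    moreover have "(\<Sum>j=1..K. tgt j * ln (qL K v' j)) = (\<Sum>j=1..K. tgt j * ln ((tgt j + q j)/2))"
      by (rule sum.cong) (auto simp: QL add.commute)
    ultimately show ?thesis using LS R_LS[OF S, of \<alpha> v] R_LS[OF S, of \<alpha> v'] by (simp add: q_def v'_def tg)
  next
    case MLS
    then have tg: "tgt = \<eta>" by (simp add: tgt)
    define p where "p = (\<lambda>j. s_al K \<alpha> (\<eta> j))"
    define r where "r = (\<lambda>j. s_al K \<alpha> (q j))"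
    have "(\<Sum>j=1..K. p j * ln (r j)) < (\<Sum>j=1..K. p j * ln ((p j + r j)/2))"
    proof (rule CE_strict)
      show "\<forall>j\<in>{1..K}. 0 \<le> p j" using s_nonneg[OF al K] eta e1 by (auto simp: p_def)
      show "\<forall>j\<in>{1..K}. 0 < r j" using s_pos[OF al K] q by (auto simp: r_def)
      show "(\<Sum>j=1..K. p j) = (\<Sum>j=1..K. r j)" using sse qs K s_sum[of K \<alpha> q] by (simp add: p_def r_def)
      show "\<exists>j\<in>{1..K}. p j \<noteq> r j" using ne' tg s_inj[OF al_ne1[OF al]] by (auto simp: p_def r_def)
    qed simp
    moreover have "(\<Sum>j=1..K. p j * ln (s_al K \<alpha> (qL K v' j))) = (\<Sum>j=1..K. p j * ln ((p j + r j)/2))"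
      by (rule sum.cong) (auto simp: QL tg s_mid p_def r_def add.commute)
    ultimately show ?thesis using MLS R_MLS[OF S, of \<alpha> v] R_MLS[OF S, of \<alpha> v'] by (simp add: q_def v'_def p_def r_def)
  next
    case LSQ
    then have tg: "tgt = \<eta>" by (simp add: tgt)
    have "(\<Sum>j=1..K. (qL K v' j - \<eta> j)^2 + (\<eta> j - (\<eta> j)^2)) < (\<Sum>j=1..K. (q j - \<eta> j)^2 + (\<eta> j - (\<eta> j)^2))"
    proof (rule sum_strict_mono_ex1)
      have eq: "qL K v' j - \<eta> j = (q j - \<eta> j)/2" if "j \<in> {1..K}" for j
        using QL[OF that] tg by (simp add: field_simps)
      show "\<forall>j\<in>{1..K}. (qL K v' j - \<eta> j)^2 + (\<eta> j - (\<eta> j)^2) \<le> (q j - \<eta> j)^2 + (\<eta> j - (\<eta> j)^2)"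
      proof
        fix j assume j: "j \<in> {1..K}"
        have "(qL K v' j - \<eta> j)^2 = (q j - \<eta> j)^2 / 4" unfolding eq[OF j] by (simp add: power_divide)
        moreover have "0 \<le> (q j - \<eta> j)^2" by simp
        ultimately show "(qL K v' j - \<eta> j)^2 + (\<eta> j - (\<eta> j)^2) \<le> (q j - \<eta> j)^2 + (\<eta> j - (\<eta> j)^2)"
          by linarith
      qed
      from ne' obtain j where j: "j \<in> {1..K}" "\<eta> j \<noteq> q j" using tg by auto
      have "0 < (q j - \<eta> j)^2" using j(2) by simp
      moreover have "(qL K v' j - \<eta> j)^2 = (q j - \<eta> j)^2 / 4" unfolding eq[OF j(1)] by (simp add: power_divide)
      ultimately have "(qL K v' j - \<eta> j)^2 < (q j - \<eta> j)^2" by linarith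
      then show "\<exists>j\<in>{1..K}. (qL K v' j - \<eta> j)^2 + (\<eta> j - (\<eta> j)^2) < (q j - \<eta> j)^2 + (\<eta> j - (\<eta> j)^2)"
        using eq j by auto
    qed simp
    then show ?thesis using LSQ R_LSQ[OF S, of v] R_LSQ[OF S, of v'] by (simp add: q_def v'_def)
  qed
qed


theorem proposition2:
  fixes M :: "'w measure" and X :: "'w \<Rightarrow> real^'d" and Y :: "'w \<Rightarrow> nat"
    and K :: nat and \<alpha> :: real and loss :: "nat \<Rightarrow> nat \<Rightarrow> real"
    and kind :: loss_kind and gbar :: "real^'d \<Rightarrow> nat \<Rightarrow> real"
    and h :: "(nat \<Rightarrow> real) \<Rightarrow> nat"
  assumes "prob_space M"
    and "K \<ge> 2"
    and "X \<in> borel_measurable M"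
    and "Y \<in> M \<rightarrow>\<^sub>M count_space UNIV"
    and "\<forall>\<omega>\<in>space M. Y \<omega> \<in> {1..K}"
    and "\<forall>l\<in>{1..K}. \<forall>k\<in>{1..K}. loss l k \<ge> 0"
    and "(0 \<le> \<alpha> \<and> \<alpha> < 1) \<or> (1 < \<alpha> \<and> \<alpha> \<le> real K / (real K - 1))"
    and "gbar \<in> score_fns K"
    and "\<forall>g\<in>score_fns K.
           (\<integral>\<^sup>+\<omega>. ennreal (phi kind K \<alpha> (gbar (X \<omega>)) (Y \<omega>)) \<partial>M)
         \<le> (\<integral>\<^sup>+\<omega>. ennreal (phi kind K \<alpha> (g (X \<omega>)) (Y \<omega>)) \<partial>M)"
    and "\<forall>v. h v \<in> {1..K} \<and>
           (\<forall>l\<in>{1..K}. (\<Sum>k=1..K. qdec kind K \<alpha> v k * loss (h v) k)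
                      \<le> (\<Sum>k=1..K. qdec kind K \<alpha> v k * loss l k))"
    and "(\<lambda>x. h (gbar x)) \<in> borel \<rightarrow>\<^sub>M count_space UNIV"
  shows "(\<integral>\<^sup>+\<omega>. ennreal (loss (h (gbar (X \<omega>))) (Y \<omega>)) \<partial>M)
       = (INF f\<in>classifiers K. \<integral>\<^sup>+\<omega>. ennreal (loss (f (X \<omega>)) (Y \<omega>)) \<partial>M)"
proof -
  note P = assms(1) and K = assms(2) and Xm = assms(3) and Ym = assms(4) and Yr = assms(5)
    and lossnn = assms(6) and gbar = assms(8) and gmin = assms(9) and hprop = assms(10) and hm = assms(11)
  have al: "alcond K \<alpha>" using assms(7) by (simp add: alcond_def)
  have K1: "K \<ge> 1" using K by simp
  interpret prob_space M by (rule P)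
  define \<mu> where "\<mu> = distr M borel X"
  interpret mu: prob_space \<mu> unfolding \<mu>_def by (rule prob_space_distr[OF Xm])
  obtain \<eta> :: "nat \<Rightarrow> real^'d \<Rightarrow> real" where
    etam: "\<forall>k. \<eta> k \<in> borel_measurable borel" and etann: "\<forall>k x. 0 \<le> \<eta> k x"
    and etas: "\<forall>x. (\<Sum>k=1..K. \<eta> k x) = 1"
    and dec: "\<forall>F. (\<forall>k\<in>{1..K}. (\<lambda>x. F x k) \<in> borel_measurable borel) \<longrightarrow>
        (\<integral>\<^sup>+\<omega>. F (X \<omega>) (Y \<omega>) \<partial>M) = (\<integral>\<^sup>+x. (\<Sum>k=1..K. ennreal (\<eta> k x) * F x k) \<partial>\<mu>)"
    using eta_exists[OF P Xm Ym Yr K1] unfolding \<mu>_def by blast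
  note etam' = etam[rule_format, measurable]
  have qLm: "(\<lambda>x. qL K (g x) j) \<in> borel_measurable borel" if "g \<in> score_fns K" "j \<in> {1..K}" for g j
  proof -
    have gm: "(\<lambda>x. g x l) \<in> borel_measurable borel" if "l \<in> {1..K}" for l
      using \<open>g \<in> score_fns K\<close> that by (auto simp: score_fns_def)
    show ?thesis unfolding qL_def
      by (intro borel_measurable_divide borel_measurable_exp[THEN measurable_compose_rev] borel_measurable_sum gm that)
  qed
  have phim: "(\<lambda>x. phi kind K \<alpha> (g x) y) \<in> borel_measurable borel" if g: "g \<in> score_fns K" for g y
  proof -
    note q = qLm[OF g]
    have lq: "(\<lambda>x. ln (qL K (g x) j)) \<in> borel_measurable borel" if "j \<in> {1..K}" for j
      using q[OF that] by measurable
    have slq: "(\<lambda>x. ln (s_al K \<alpha> (qL K (g x) j))) \<in> borel_measurable borel" if "j \<in> {1..K}" for j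
      using q[OF that] unfolding s_al_def by measurable
    show ?thesis
    proof (cases kind)
      case LR then show ?thesis unfolding LR phi.simps phi_LR_def
        by (intro borel_measurable_uminus borel_measurable_sum borel_measurable_times lq) auto
    next
      case LS then show ?thesis unfolding LS phi.simps phi_LS_def
        by (intro borel_measurable_uminus borel_measurable_sum borel_measurable_times lq) auto
    next
      case MLS then show ?thesis unfolding MLS phi.simps phi_MLS_def
        by (intro borel_measurable_uminus borel_measurable_sum borel_measurable_times slq) auto
    next
      case LSQ then show ?thesis unfolding LSQ phi.simps phi_LSQ_def
        by (intro borel_measurable_sum borel_measurable_power borel_measurable_diff q) auto
    qed
  qed
  define R where "R = (\<lambda>g x. \<Sum>k=1..K. \<eta> k x * phi kind K \<alpha> (g x) k)"
  have Rnn: "0 \<le> R g x" for g x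
    unfolding R_def using etann phi_nonneg[OF K al] by (auto intro!: sum_nonneg)
  have Rm: "(\<lambda>x. R g x) \<in> borel_measurable borel" if "g \<in> score_fns K" for g
    unfolding R_def by (intro borel_measurable_sum borel_measurable_times etam' phim[OF that])
  have SR: "(\<integral>\<^sup>+\<omega>. ennreal (phi kind K \<alpha> (g (X \<omega>)) (Y \<omega>)) \<partial>M) = (\<integral>\<^sup>+x. ennreal (R g x) \<partial>\<mu>)"
    if g: "g \<in> score_fns K" for g
  proof -
    have "(\<integral>\<^sup>+\<omega>. ennreal (phi kind K \<alpha> (g (X \<omega>)) (Y \<omega>)) \<partial>M)
        = (\<integral>\<^sup>+x. (\<Sum>k=1..K. ennreal (\<eta> k x) * ennreal (phi kind K \<alpha> (g x) k)) \<partial>\<mu>)"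
      using dec[rule_format, of "\<lambda>x k. ennreal (phi kind K \<alpha> (g x) k)"] phim[OF g] by simp
    also have "\<dots> = (\<integral>\<^sup>+x. ennreal (R g x) \<partial>\<mu>)"
    proof (rule nn_integral_cong)
      fix x
      have "(\<Sum>k=1..K. ennreal (\<eta> k x) * ennreal (phi kind K \<alpha> (g x) k))
          = (\<Sum>k=1..K. ennreal (\<eta> k x * phi kind K \<alpha> (g x) k))"
      proof (rule sum.cong[OF refl])
        fix k assume k: "k \<in> {1..K}"
        show "ennreal (\<eta> k x) * ennreal (phi kind K \<alpha> (g x) k) = ennreal (\<eta> k x * phi kind K \<alpha> (g x) k)"
          using ennreal_mult[OF etann[rule_format] phi_nonneg[OF K al k]] by simp
      qed
      also have "\<dots> = ennreal (R g x)" unfolding R_def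
        by (rule sum_ennreal) (use etann phi_nonneg[OF K al] in auto)
      finally show "(\<Sum>k=1..K. ennreal (\<eta> k x) * ennreal (phi kind K \<alpha> (g x) k)) = ennreal (R g x)" .
    qed
    finally show ?thesis .
  qed
  have zero: "(\<lambda>x::real^'d. \<lambda>j::nat. 0::real) \<in> score_fns K" by (simp add: score_fns_def)
  define C where "C = (\<Sum>k=1..K. phi kind K \<alpha> (\<lambda>j. 0) k)"
  have "(\<integral>\<^sup>+\<omega>. ennreal (phi kind K \<alpha> (\<lambda>j. 0) (Y \<omega>)) \<partial>M) \<le> (\<integral>\<^sup>+\<omega>. ennreal C \<partial>M)"
  proof (rule nn_integral_mono)
    fix \<omega> assume w: "\<omega> \<in> space M"
    have "phi kind K \<alpha> (\<lambda>j. 0) (Y \<omega>) \<le> C" unfolding C_def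
      by (rule member_le_sum) (use w Yr phi_nonneg[OF K al] in auto)
    then show "ennreal (phi kind K \<alpha> (\<lambda>j. 0) (Y \<omega>)) \<le> ennreal C" by (rule ennreal_leI)
  qed
  also have "\<dots> < \<infinity>" by (simp add: emeasure_space_1)
  finally have fin0: "(\<integral>\<^sup>+\<omega>. ennreal (phi kind K \<alpha> (\<lambda>j. 0) (Y \<omega>)) \<partial>M) < \<infinity>" .
  have fin: "(\<integral>\<^sup>+x. ennreal (R gbar x) \<partial>\<mu>) < \<infinity>"
    using gmin[rule_format, OF zero] fin0 SR[OF gbar] by simp
  define tgt where "tgt = (\<lambda>x j. if kind = LS then s_al K \<alpha> (\<eta> j x) else \<eta> j x)"
  define B where "B = {x. \<exists>j\<in>{1..K}. qL K (gbar x) j \<noteq> tgt x j}"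
  have tgtm: "(\<lambda>x. tgt x j) \<in> borel_measurable borel" for j
    unfolding tgt_def s_al_def by measurable
  have Bm: "B \<in> sets borel"
  proof -
    have "B = (\<Union>j\<in>{1..K}. {x \<in> space borel. qL K (gbar x) j \<noteq> tgt x j})" by (auto simp: B_def)
    also have "\<dots> \<in> sets borel"
    proof (intro sets.finite_UN)
      fix j assume j: "j \<in> {1..K}"
      note [measurable] = qLm[OF gbar j] tgtm[of j]
      show "{x \<in> space borel. qL K (gbar x) j \<noteq> tgt x j} \<in> sets borel" by measurable
    qed simp
    finally show ?thesis .
  qed
  define g' where "g' = (\<lambda>x. if x \<in> B then (\<lambda>j. ln ((qL K (gbar x) j + tgt x j)/2)) else gbar x)"
  have g': "g' \<in> score_fns K"
    unfolding score_fns_def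
  proof (intro CollectI ballI)
    fix k assume k: "k \<in> {1..K}"
    have "(\<lambda>x. ln ((qL K (gbar x) k + tgt x k)/2)) \<in> borel_measurable borel"
      using qLm[OF gbar k] tgtm[of k] by measurable
    moreover have "(\<lambda>x. gbar x k) \<in> borel_measurable borel" using gbar k by (auto simp: score_fns_def)
    ultimately have "(\<lambda>x. if x \<in> B then ln ((qL K (gbar x) k + tgt x k)/2) else gbar x k) \<in> borel_measurable borel"
      using Bm by (intro measurable_If_set) auto
    moreover have "(\<lambda>x. g' x k) = (\<lambda>x. if x \<in> B then ln ((qL K (gbar x) k + tgt x k)/2) else gbar x k)"
      by (rule ext) (auto simp: g'_def)
    ultimately show "(\<lambda>x. g' x k) \<in> borel_measurable borel" by simp
  qed
  have pw: "R g' x < R gbar x" if "x \<in> B" for x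
  proof -
    have "(\<Sum>k=1..K. \<eta> k x * phi kind K \<alpha> (\<lambda>j. ln ((qL K (gbar x) j + tgt x j)/2)) k)
       < (\<Sum>k=1..K. \<eta> k x * phi kind K \<alpha> (gbar x) k)"
      by (rule pointwise[OF K al, where \<eta>="\<lambda>j. \<eta> j x"]) (use etann etas that in \<open>auto simp: B_def tgt_def\<close>)
    then show ?thesis using that by (simp add: R_def g'_def)
  qed
  have pw2: "R g' x = R gbar x" if "x \<notin> B" for x using that by (simp add: R_def g'_def)
  have AEB: "AE x in \<mu>. x \<notin> B"
  proof (rule ccontr)
    assume nAE: "\<not> (AE x in \<mu>. x \<notin> B)"
    have le: "(\<integral>\<^sup>+x. ennreal (R g' x) \<partial>\<mu>) \<le> (\<integral>\<^sup>+x. ennreal (R gbar x) \<partial>\<mu>)"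
      by (rule nn_integral_mono) (metis ennreal_leI less_imp_le order_refl pw pw2)
    have "(\<integral>\<^sup>+x. ennreal (R g' x) \<partial>\<mu>) < (\<integral>\<^sup>+x. ennreal (R gbar x) \<partial>\<mu>)"
    proof (rule nn_integral_less)
      show "(\<lambda>x. ennreal (R g' x)) \<in> borel_measurable \<mu>" using Rm[OF g'] by (simp add: \<mu>_def)
      show "(\<lambda>x. ennreal (R gbar x)) \<in> borel_measurable \<mu>" using Rm[OF gbar] by (simp add: \<mu>_def)
      show "(\<integral>\<^sup>+x. ennreal (R g' x) \<partial>\<mu>) \<noteq> \<infinity>" using le fin by (simp add: top.not_eq_extremum le_less_trans)
      show "AE x in \<mu>. ennreal (R g' x) \<le> ennreal (R gbar x)"
        by (rule AE_I2) (metis ennreal_leI less_imp_le order_refl pw pw2)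
      show "\<not> (AE x in \<mu>. ennreal (R gbar x) \<le> ennreal (R g' x))"
      proof
        assume "AE x in \<mu>. ennreal (R gbar x) \<le> ennreal (R g' x)"
        then have "AE x in \<mu>. x \<notin> B"
        proof (rule AE_mp, intro AE_I2 impI)
          fix x assume "ennreal (R gbar x) \<le> ennreal (R g' x)"
          then have "R gbar x \<le> R g' x" using Rnn by (simp add: ennreal_le_iff)
          then show "x \<notin> B" using pw by force
        qed
        then show False using nAE by simp
      qed
    qed
    then show False using gmin[rule_format, OF g'] SR[OF g'] SR[OF gbar] by simp
  qed
  have qdec_eq: "qdec kind K \<alpha> (gbar x) j = \<eta> j x" if "x \<notin> B" "j \<in> {1..K}" for x j
  proof -
    have e: "qL K (gbar x) j = tgt x j" using that by (auto simp: B_def)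
    show ?thesis
      by (cases kind) (use e s_inv_s[OF al_ne1[OF al]] in \<open>auto simp: tgt_def qRL_def\<close>)
  qed
  have lossm: "(\<lambda>x. ennreal (loss (f x) k)) \<in> borel_measurable borel"
    if "f \<in> borel \<rightarrow>\<^sub>M count_space UNIV" for f k
    by (rule measurable_compose[OF that]) simp
  have LR_eq: "(\<integral>\<^sup>+\<omega>. ennreal (loss (f (X \<omega>)) (Y \<omega>)) \<partial>M)
      = (\<integral>\<^sup>+x. ennreal (\<Sum>k=1..K. \<eta> k x * loss (f x) k) \<partial>\<mu>)"
    if fm: "f \<in> borel \<rightarrow>\<^sub>M count_space UNIV" and fr: "\<forall>x. f x \<in> {1..K}" for f
  proof -
    have "(\<integral>\<^sup>+\<omega>. ennreal (loss (f (X \<omega>)) (Y \<omega>)) \<partial>M)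
        = (\<integral>\<^sup>+x. (\<Sum>k=1..K. ennreal (\<eta> k x) * ennreal (loss (f x) k)) \<partial>\<mu>)"
      using dec[rule_format, of "\<lambda>x k. ennreal (loss (f x) k)"] lossm[OF fm] by simp
    also have "\<dots> = (\<integral>\<^sup>+x. ennreal (\<Sum>k=1..K. \<eta> k x * loss (f x) k) \<partial>\<mu>)"
    proof (rule nn_integral_cong)
      fix x
      have "(\<Sum>k=1..K. ennreal (\<eta> k x) * ennreal (loss (f x) k)) = (\<Sum>k=1..K. ennreal (\<eta> k x * loss (f x) k))"
      proof (rule sum.cong[OF refl])
        fix k assume k: "k \<in> {1..K}"
        have "0 \<le> loss (f x) k" using lossnn fr k by blast
        then show "ennreal (\<eta> k x) * ennreal (loss (f x) k) = ennreal (\<eta> k x * loss (f x) k)"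
          using ennreal_mult[OF etann[rule_format]] by simp
      qed
      also have "\<dots> = ennreal (\<Sum>k=1..K. \<eta> k x * loss (f x) k)"
        by (rule sum_ennreal) (use etann lossnn fr in auto)
      finally show "(\<Sum>k=1..K. ennreal (\<eta> k x) * ennreal (loss (f x) k)) = ennreal (\<Sum>k=1..K. \<eta> k x * loss (f x) k)" .
    qed
    finally show ?thesis .
  qed
  have hr: "\<forall>x. h (gbar x) \<in> {1..K}" using hprop by blast
  have hcl: "(\<lambda>x. h (gbar x)) \<in> classifiers K" using hm hr by (simp add: classifiers_def)
  have opt: "(\<integral>\<^sup>+\<omega>. ennreal (loss (h (gbar (X \<omega>))) (Y \<omega>)) \<partial>M) \<le> (\<integral>\<^sup>+\<omega>. ennreal (loss (f (X \<omega>)) (Y \<omega>)) \<partial>M)"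
    if f: "f \<in> classifiers K" for f
  proof -
    have fm: "f \<in> borel \<rightarrow>\<^sub>M count_space UNIV" and fr: "\<forall>x. f x \<in> {1..K}"
      using f by (auto simp: classifiers_def)
    have "(\<integral>\<^sup>+x. ennreal (\<Sum>k=1..K. \<eta> k x * loss (h (gbar x)) k) \<partial>\<mu>) \<le> (\<integral>\<^sup>+x. ennreal (\<Sum>k=1..K. \<eta> k x * loss (f x) k) \<partial>\<mu>)"
    proof (rule nn_integral_mono_AE)
      show "AE x in \<mu>. ennreal (\<Sum>k=1..K. \<eta> k x * loss (h (gbar x)) k) \<le> ennreal (\<Sum>k=1..K. \<eta> k x * loss (f x) k)"
        using AEB
      proof (rule AE_mp, intro AE_I2 impI)
        fix x assume x: "x \<notin> B"
        have "(\<Sum>k=1..K. qdec kind K \<alpha> (gbar x) k * loss (h (gbar x)) k) \<le> (\<Sum>k=1..K. qdec kind K \<alpha> (gbar x) k * loss (f x) k)"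
          using hprop fr by blast
        moreover have "(\<Sum>k=1..K. qdec kind K \<alpha> (gbar x) k * loss l k) = (\<Sum>k=1..K. \<eta> k x * loss l k)" for l
          by (rule sum.cong) (auto simp: qdec_eq[OF x])
        ultimately show "ennreal (\<Sum>k=1..K. \<eta> k x * loss (h (gbar x)) k) \<le> ennreal (\<Sum>k=1..K. \<eta> k x * loss (f x) k)"
          by (intro ennreal_leI) simp
      qed
    qed
    then show ?thesis using LR_eq[OF hm hr] LR_eq[OF fm fr] by simp
  qed
  show ?thesis
  proof (rule antisym)
    show "(\<integral>\<^sup>+\<omega>. ennreal (loss (h (gbar (X \<omega>))) (Y \<omega>)) \<partial>M) \<le> (INF f\<in>classifiers K. \<integral>\<^sup>+\<omega>. ennreal (loss (f (X \<omega>)) (Y \<omega>)) \<partial>M)"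
      by (rule INF_greatest) (rule opt)
    show "(INF f\<in>classifiers K. \<integral>\<^sup>+\<omega>. ennreal (loss (f (X \<omega>)) (Y \<omega>)) \<partial>M) \<le> (\<integral>\<^sup>+\<omega>. ennreal (loss (h (gbar (X \<omega>))) (Y \<omega>)) \<partial>M)"
      using INF_lower[OF hcl, of "\<lambda>f. \<integral>\<^sup>+\<omega>. ennreal (loss (f (X \<omega>)) (Y \<omega>)) \<partial>M"] by simp
  qed
qed
end
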